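(* For $n\ge 0$ let $P_n$ denote the path graph on $n$ vertices ($P_0$ is the empty graph, $P_1$ a single vertex, and for $n\ge 2$ a tree with exactly $n-2$ vertices of degree $2$). Then, as formal power series in $x$, $$\sum_{n\ge 0} \mathrm{sa}(P_n;t)\, x^n = \frac{-1+2tx+\sqrt{1+4x^2}}{2tx-2(t^2-1)x^2}.$$
   Context: All graphs are finite, simple and undirected. For a graph $G=(V,E)$ and $V'\subseteq V$, $G|_{V'}$ denotes the induced subgraph on $V'$. The signed a-number $\mathrm{sa}(G)$ is defined recursively: $\mathrm{sa}(G)=1$ if $G$ is the empty graph (no vertices); $\mathrm{sa}(G)=0$ if $G$ has a connected component with an odd number of vertices; otherwise $\mathrm{sa}(G)=-\sum_{V'\subsetneq V}\mathrm{sa}(G|_{V'})$. The signed a-polynomial of $G$ is $\mathrm{sa}(G;t)=\sum_{V'\subseteq V}\mathrm{sa}(G|_{V'})\,t^{|V\setminus V'|}$. *)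

theory Defs
  imports "HOL-Computational_Algebra.Computational_Algebra"
begin

text \<open>A simple graph is represented by a vertex set V together with a (symmetric,
irreflexive) edge relation E; the induced subgraph on V' is (V', E) restricted to V'.\<close>

definition reach :: "('a \<Rightarrow> 'a \<Rightarrow> bool) \<Rightarrow> 'a set \<Rightarrow> 'a \<Rightarrow> 'a \<Rightarrow> bool" where
  "reach E V = (\<lambda>x y. x \<in> V \<and> y \<in> V \<and> E x y)\<^sup>*\<^sup>*"

definition has_odd_component :: "('a \<Rightarrow> 'a \<Rightarrow> bool) \<Rightarrow> 'a set \<Rightarrow> bool" where
  "has_odd_component E V = (\<exists>v\<in>V. odd (card {w \<in> V. reach E V v w}))"

function sa :: "('a \<Rightarrow> 'a \<Rightarrow> bool) \<Rightarrow> 'a set \<Rightarrow> int" where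
  "sa E V = (if \<not> finite V then 0
             else if V = {} then 1
             else if has_odd_component E V then 0
             else - (\<Sum>U \<in> {U. U \<subset> V}. sa E U))"
  by auto
termination
  by (relation "measure (\<lambda>(E, V). card V)")
     (auto intro: psubset_card_mono)

definition sa_poly :: "('a \<Rightarrow> 'a \<Rightarrow> bool) \<Rightarrow> 'a set \<Rightarrow> int poly" where
  "sa_poly E V = (\<Sum>U \<in> Pow V. monom (sa E U) (card (V - U)))"

text \<open>Path graph P_n: vertex set {0..<n}, edges between i and i+1.\<close>
definition path_edge :: "nat \<Rightarrow> nat \<Rightarrow> bool" where
  "path_edge i j = (Suc i = j \<or> Suc j = i)"

text \<open>The formal variable t, as a constant power series over the field of fractions of Z[t].\<close>
definition T :: "int poly fract fps" where
  "T = fps_const (Fract [:0, 1:] 1)"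

text \<open>sqrt(1+4x^2): the power series square root with constant term 1.\<close>
definition sqrt_1_4x2 :: "int poly fract fps" where
  "sqrt_1_4x2 = fps_radical (\<lambda>_ _. 1) 2 (1 + 4 * fps_X ^ 2)"

end

theory Submission
  imports Defs
begin

declare sa.simps[simp del]

lemma sa_empty: "sa E {} = 1"
  by (subst sa.simps) simp

lemma sa_odd: "finite V \<Longrightarrow> has_odd_component E V \<Longrightarrow> sa E V = 0"
  by (subst sa.simps) (auto simp: has_odd_component_def)

lemma sa_rec: "finite V \<Longrightarrow> V \<noteq> {} \<Longrightarrow> \<not> has_odd_component E V \<Longrightarrow>
   sa E V = - (\<Sum>U \<in> {U. U \<subset> V}. sa E U)"
  by (subst sa.simps) simp

lemma Pow_split: "Pow V = insert V {U. U \<subset> V}" by auto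

lemma sa_sum_zero: "finite V \<Longrightarrow> V \<noteq> {} \<Longrightarrow> \<not> has_odd_component E V \<Longrightarrow>
   (\<Sum>U \<in> Pow V. sa E U) = 0"
  apply (subst Pow_split)
  apply (subst sum.insert)
  using sa_rec[of V E] finite_subset[of "{U. U \<subset> V}" "Pow V"] by auto

lemma reach_mono: "reach E A v w \<Longrightarrow> A \<subseteq> B \<Longrightarrow> reach E B v w"
  unfolding reach_def
  by (erule rtranclp_mono[THEN predicate2D, rotated]) auto

lemma reach_confine:
  assumes "reach E U v w" "v \<in> A" "A \<subseteq> U" "\<And>x y. x \<in> A \<Longrightarrow> y \<in> U \<Longrightarrow> E x y \<Longrightarrow> y \<in> A"
  shows "w \<in> A \<and> reach E A v w"
  using assms(1) unfolding reach_def
proof (induction rule: rtranclp_induct)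
  case base then show ?case using assms(2) by simp
next
  case (step y z)
  then show ?case using assms(4)
    by (metis (mono_tags, lifting) rtranclp.rtrancl_into_rtrancl)
qed

lemma reach_image:
  assumes "reach E V a b" "a \<in> V" "\<And>x y. x \<in> V \<Longrightarrow> y \<in> V \<Longrightarrow> E (f x) (f y) = E x y"
  shows "reach E (f ` V) (f a) (f b)"
  using assms(1) unfolding reach_def
proof (induction rule: rtranclp_induct)
  case base then show ?case by simp
next
  case (step y z)
  then show ?case using assms(3)
    by (metis (mono_tags, lifting) image_eqI rtranclp.rtrancl_into_rtrancl)
qed

lemma comp_image:
  assumes inj: "inj_on f V" and E: "\<And>x y. x\<in>V \<Longrightarrow> y\<in>V \<Longrightarrow> E (f x) (f y) = E x y"
    and v: "v \<in> V"
  shows "{w \<in> f ` V. reach E (f ` V) (f v) w} = f ` {w\<in>V. reach E V v w}"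
proof
  show "f ` {w\<in>V. reach E V v w} \<subseteq> {w \<in> f ` V. reach E (f ` V) (f v) w}"
    using reach_image[of E V v _ f] v E by auto
next
  define g where "g = inv_into V f"
  have gf: "\<And>x. x \<in> V \<Longrightarrow> g (f x) = x" using inj unfolding g_def by simp
  have gV: "g ` f ` V = V" using gf by force
  have Eg: "\<And>x y. x\<in>f ` V \<Longrightarrow> y\<in>f ` V \<Longrightarrow> E (g x) (g y) = E x y"
    using E gf by auto
  show "{w \<in> f ` V. reach E (f ` V) (f v) w} \<subseteq> f ` {w\<in>V. reach E V v w}"
  proof
    fix w' assume w': "w' \<in> {w \<in> f ` V. reach E (f ` V) (f v) w}"
    then obtain w where w: "w \<in> V" "w' = f w" by auto
    have "reach E (g ` f ` V) (g (f v)) (g (f w))"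
      using reach_image[of E "f ` V" "f v" "f w" g] w w' Eg v by auto
    then have "reach E V v w" using gV gf v w by simp
    then show "w' \<in> f ` {w\<in>V. reach E V v w}" using w by auto
  qed
qed

lemma odd_image:
  assumes inj: "inj_on f V" and E: "\<And>x y. x\<in>V \<Longrightarrow> y\<in>V \<Longrightarrow> E (f x) (f y) = E x y"
  shows "has_odd_component E (f ` V) = has_odd_component E V"
proof -
  have "\<And>v. v \<in> V \<Longrightarrow> card {w \<in> f ` V. reach E (f ` V) (f v) w} = card {w\<in>V. reach E V v w}"
    using comp_image[of f V E] inj E by (simp add: card_image inj_on_subset)
  then show ?thesis unfolding has_odd_component_def by auto
qed

lemma sa_image:
  assumes "inj_on f V" "\<And>x y. x\<in>V \<Longrightarrow> y\<in>V \<Longrightarrow> E (f x) (f y) = E x y"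
  shows "sa E (f ` V) = sa E V"
  using assms
proof (induction "card V" arbitrary: V rule: less_induct)
  case less
  show ?case
  proof (cases "finite V")
    case False
    then have "\<not> finite (f ` V)" using less.prems(1) finite_image_iff by blast
    then show ?thesis using False by (subst (1 2) sa.simps) simp
  next
    case fin: True
    show ?thesis
    proof (cases "V = {}")
      case True then show ?thesis by simp
    next
      case ne: False
      show ?thesis
      proof (cases "has_odd_component E V")
        case True
        then show ?thesis using sa_odd[of V E] sa_odd[of "f ` V" E] fin odd_image[of f V E] less.prems by auto
      next
        case nodd: False
        have im: "image f ` {U. U \<subset> V} = {U. U \<subset> f ` V}"
        proof
          show "image f ` {U. U \<subset> V} \<subseteq> {U. U \<subset> f ` V}"
            using less.prems(1) by (auto simp: inj_on_image_eq_iff[OF less.prems(1)] inj_on_def) 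
          show "{U. U \<subset> f ` V} \<subseteq> image f ` {U. U \<subset> V}"
          proof
            fix U assume "U \<in> {U. U \<subset> f ` V}"
            then have U: "U \<subset> f ` V" by simp
            then obtain W where W: "W \<subseteq> V" "U = f ` W" by (meson psubset_imp_subset subset_image_iff)
            then have "W \<subset> V" using U by auto
            then show "U \<in> image f ` {U. U \<subset> V}" using W by auto
          qed
        qed
        have injP: "inj_on (image f) {U. U \<subset> V}"
          using inj_on_image_Pow[OF less.prems(1)] by (rule inj_on_subset) auto
        have "(\<Sum>U \<in> {U. U \<subset> f ` V}. sa E U) = (\<Sum>U \<in> {U. U \<subset> V}. sa E (f ` U))"
          by (subst im[symmetric], subst sum.reindex[OF injP]) simp
        also have "\<dots> = (\<Sum>U \<in> {U. U \<subset> V}. sa E U)"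
        proof (rule sum.cong[OF refl])
          fix U assume "U \<in> {U. U \<subset> V}"
          then have U: "U \<subset> V" by simp
          then have "card U < card V" using fin psubset_card_mono by blast
          then show "sa E (f ` U) = sa E U"
            using less.hyps[of U] less.prems U inj_on_subset by blast
        qed
        finally show ?thesis
          using sa_rec[OF fin ne nodd] sa_rec[of "f ` V" E] fin ne nodd odd_image[of f V E] less.prems by simp
      qed
    qed
  qed
qed

lemma comp_split:
  assumes noE: "\<And>a b. a \<in> A \<Longrightarrow> b \<in> B \<Longrightarrow> \<not> E a b \<and> \<not> E b a" and dis: "A \<inter> B = {}"
    and v: "v \<in> A"
  shows "{w\<in>A \<union> B. reach E (A \<union> B) v w} = {w\<in>A. reach E A v w}"
proof
  show "{w\<in>A \<union> B. reach E (A \<union> B) v w} \<subseteq> {w\<in>A. reach E A v w}"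
  proof
    fix w assume "w \<in> {w\<in>A \<union> B. reach E (A \<union> B) v w}"
    then have "reach E (A \<union> B) v w" by simp
    from reach_confine[OF this v] noE show "w \<in> {w\<in>A. reach E A v w}" by blast
  qed
  show "{w\<in>A. reach E A v w} \<subseteq> {w\<in>A \<union> B. reach E (A \<union> B) v w}"
    using reach_mono[of E A v _ "A \<union> B"] by auto
qed

lemma odd_split:
  assumes noE: "\<And>a b. a \<in> A \<Longrightarrow> b \<in> B \<Longrightarrow> \<not> E a b \<and> \<not> E b a" and dis: "A \<inter> B = {}"
  shows "has_odd_component E (A \<union> B) = (has_odd_component E A \<or> has_odd_component E B)"
proof -
  have 1: "\<And>v. v \<in> A \<Longrightarrow> {w\<in>A \<union> B. reach E (A \<union> B) v w} = {w\<in>A. reach E A v w}"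
    using comp_split[of A B E] noE dis by blast
  have 2: "\<And>v. v \<in> B \<Longrightarrow> {w\<in>B \<union> A. reach E (B \<union> A) v w} = {w\<in>B. reach E B v w}"
    using comp_split[of B A E] noE dis by blast
  have 3: "\<And>v. v \<in> B \<Longrightarrow> {w\<in>A \<union> B. reach E (A \<union> B) v w} = {w\<in>B. reach E B v w}"
    using 2 by (simp add: Un_commute)
  show ?thesis unfolding has_odd_component_def
  proof
    assume "\<exists>v\<in>A \<union> B. odd (card {w \<in> A \<union> B. reach E (A \<union> B) v w})"
    then show "(\<exists>v\<in>A. odd (card {w \<in> A. reach E A v w})) \<or> (\<exists>v\<in>B. odd (card {w \<in> B. reach E B v w}))"
      using 1 3 by (metis UnE)
  next
    assume "(\<exists>v\<in>A. odd (card {w \<in> A. reach E A v w})) \<or> (\<exists>v\<in>B. odd (card {w \<in> B. reach E B v w}))"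
    then show "\<exists>v\<in>A \<union> B. odd (card {w \<in> A \<union> B. reach E (A \<union> B) v w})"
      using 1 3 by (metis UnI1 UnI2)
  qed
qed

lemma sum_Pow_Un:
  assumes "finite A" "finite B" "A \<inter> B = {}"
  shows "(\<Sum>W\<in>Pow (A \<union> B). (g :: 'a set \<Rightarrow> int) (W \<inter> A) * h (W \<inter> B)) = (\<Sum>X\<in>Pow A. g X) * (\<Sum>Y\<in>Pow B. h Y)"
proof -
  have bij: "bij_betw (\<lambda>(X,Y). X \<union> Y) (Pow A \<times> Pow B) (Pow (A \<union> B))"
    unfolding bij_betw_def
  proof
    show "inj_on (\<lambda>(X, Y). X \<union> Y) (Pow A \<times> Pow B)"
    proof (rule inj_onI, clarify)
      fix X Y X' Y' assume h: "X \<subseteq> A" "Y \<subseteq> B" "X' \<subseteq> A" "Y' \<subseteq> B" "X \<union> Y = X' \<union> Y'"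
      have "X = (X \<union> Y) \<inter> A" "X' = (X' \<union> Y') \<inter> A" "Y = (X \<union> Y) \<inter> B" "Y' = (X' \<union> Y') \<inter> B"
        using h assms(3) by auto
      then show "X = X' \<and> Y = Y'" using h(5) by metis
    qed
    show "(\<lambda>(X, Y). X \<union> Y) ` (Pow A \<times> Pow B) = Pow (A \<union> B)"
    proof
      show "(\<lambda>(X, Y). X \<union> Y) ` (Pow A \<times> Pow B) \<subseteq> Pow (A \<union> B)" by auto
      show "Pow (A \<union> B) \<subseteq> (\<lambda>(X, Y). X \<union> Y) ` (Pow A \<times> Pow B)"
      proof
        fix W assume "W \<in> Pow (A \<union> B)"
        then have "W = (\<lambda>(X, Y). X \<union> Y) (W \<inter> A, W \<inter> B)" by auto
        then show "W \<in> (\<lambda>(X, Y). X \<union> Y) ` (Pow A \<times> Pow B)" by blast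
      qed
    qed
  qed
  have "(\<Sum>W\<in>Pow (A \<union> B). g (W \<inter> A) * h (W \<inter> B)) =
        (\<Sum>p\<in>Pow A \<times> Pow B. (\<lambda>W. g (W \<inter> A) * h (W \<inter> B)) ((\<lambda>(X,Y). X \<union> Y) p))"
    by (rule sum.reindex_bij_betw[OF bij, symmetric])
  also have "\<dots> = (\<Sum>p\<in>Pow A \<times> Pow B. g (fst p) * h (snd p))"
  proof (rule sum.cong[OF refl])
    fix p assume "p \<in> Pow A \<times> Pow B"
    then show "(\<lambda>W. g (W \<inter> A) * h (W \<inter> B)) ((\<lambda>(X,Y). X \<union> Y) p) = g (fst p) * h (snd p)"
    proof (cases p)
      case (Pair X Y)
      then have "(X \<union> Y) \<inter> A = X" "(X \<union> Y) \<inter> B = Y" using \<open>p \<in> Pow A \<times> Pow B\<close> assms(3) by auto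
      then show ?thesis using Pair by simp
    qed
  qed
  also have "\<dots> = (\<Sum>X\<in>Pow A. g X) * (\<Sum>Y\<in>Pow B. h Y)"
    by (simp add: sum_product sum.cartesian_product case_prod_beta)
  finally show ?thesis .
qed


lemma sa_split:
  assumes "finite A" "finite B" "A \<inter> B = {}" "\<And>a b. a \<in> A \<Longrightarrow> b \<in> B \<Longrightarrow> \<not> E a b \<and> \<not> E b a"
  shows "sa E (A \<union> B) = sa E A * sa E B"
  using assms
proof (induction "card (A \<union> B)" arbitrary: A B rule: less_induct)
  case less
  note odd = odd_split[of A B E, OF less.prems(4) less.prems(3)]
  show ?case
  proof (cases "A = {} \<or> B = {}")
    case True then show ?thesis by (auto simp: sa_empty)
  next
    case ne: False
    have fin: "finite (A \<union> B)" using less.prems by simp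
    show ?thesis
    proof (cases "has_odd_component E (A \<union> B)")
      case True
      then show ?thesis using odd sa_odd[of "A \<union> B" E] sa_odd[of A E] sa_odd[of B E] fin less.prems by auto
    next
      case nodd: False
      then have nA: "\<not> has_odd_component E A" and nB: "\<not> has_odd_component E B" using odd by auto
      have IH: "\<And>W. W \<subset> A \<union> B \<Longrightarrow> sa E W = sa E (W \<inter> A) * sa E (W \<inter> B)"
      proof -
        fix W assume W: "W \<subset> A \<union> B"
        then have eq: "W = (W \<inter> A) \<union> (W \<inter> B)" by auto
        have "card ((W \<inter> A) \<union> (W \<inter> B)) < card (A \<union> B)"
          using eq W fin psubset_card_mono by metis
        then have "sa E ((W \<inter> A) \<union> (W \<inter> B)) = sa E (W \<inter> A) * sa E (W \<inter> B)"
          using less.hyps[of "W \<inter> A" "W \<inter> B"] less.prems by auto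
        then show "sa E W = sa E (W \<inter> A) * sa E (W \<inter> B)" using eq by metis
      qed
      have finP: "finite {W. W \<subset> A \<union> B}" using fin finite_subset[of "{W. W \<subset> A \<union> B}" "Pow (A \<union> B)"] by auto
      have "0 = (\<Sum>W\<in>Pow (A \<union> B). sa E W)"
        using sa_sum_zero[OF fin _ nodd] ne by simp
      also have "\<dots> = sa E (A \<union> B) + (\<Sum>W\<in>{W. W \<subset> A \<union> B}. sa E W)"
        by (subst Pow_split, subst sum.insert[OF finP]) auto
      also have "(\<Sum>W\<in>{W. W \<subset> A \<union> B}. sa E W) = (\<Sum>W\<in>{W. W \<subset> A \<union> B}. sa E (W \<inter> A) * sa E (W \<inter> B))"
        using IH by (intro sum.cong) auto
      also have "\<dots> = (\<Sum>W\<in>Pow (A \<union> B). sa E (W \<inter> A) * sa E (W \<inter> B)) - sa E A * sa E B"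
      proof -
        have "(\<Sum>W\<in>Pow (A \<union> B). sa E (W \<inter> A) * sa E (W \<inter> B)) = sa E ((A \<union> B) \<inter> A) * sa E ((A \<union> B) \<inter> B) + (\<Sum>W\<in>{W. W \<subset> A \<union> B}. sa E (W \<inter> A) * sa E (W \<inter> B))"
          by (subst Pow_split, subst sum.insert[OF finP]) auto
        moreover have "(A \<union> B) \<inter> A = A" "(A \<union> B) \<inter> B = B" using less.prems(3) by auto
        ultimately show ?thesis by simp
      qed
      also have "(\<Sum>W\<in>Pow (A \<union> B). sa E (W \<inter> A) * sa E (W \<inter> B)) = 0"
        using sum_Pow_Un[of A B "sa E" "sa E"] less.prems sa_sum_zero[of A E] nA ne by simp
      finally show ?thesis by simp
    qed
  qed
qed



definition cc :: "nat \<Rightarrow> int" where "cc n = sa path_edge {..<n}"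
definition aa :: "nat \<Rightarrow> int poly" where "aa n = sa_poly path_edge {..<n}"

lemma reach_up: "i \<le> j \<Longrightarrow> j < n \<Longrightarrow> reach path_edge {..<n} i j"
proof (induction j)
  case 0 then show ?case by (simp add: reach_def)
next
  case (Suc j)
  show ?case
  proof (cases "i = Suc j")
    case True then show ?thesis by (simp add: reach_def)
  next
    case False
    then have "reach path_edge {..<n} i j" using Suc by simp
    moreover have "path_edge j (Suc j)" by (simp add: path_edge_def)
    ultimately show ?thesis using Suc.prems unfolding reach_def
      by (metis (mono_tags, lifting) Suc_lessD lessThan_iff rtranclp.rtrancl_into_rtrancl)
  qed
qed

lemma reach_down: "i \<le> j \<Longrightarrow> j < n \<Longrightarrow> reach path_edge {..<n} j i"
proof (induction j)
  case 0 then show ?case by (simp add: reach_def)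
next
  case (Suc j)
  show ?case
  proof (cases "i = Suc j")
    case True then show ?thesis by (simp add: reach_def)
  next
    case False
    then have "reach path_edge {..<n} j i" using Suc by simp
    moreover have "path_edge (Suc j) j" by (simp add: path_edge_def)
    ultimately show ?thesis using Suc.prems unfolding reach_def
      by (metis (mono_tags, lifting) Suc_lessD lessThan_iff converse_rtranclp_into_rtranclp)
  qed
qed

lemma reach_path: "i < n \<Longrightarrow> j < n \<Longrightarrow> reach path_edge {..<n} i j"
  using reach_up reach_down by (cases "i \<le> j") auto

lemma odd_path: "has_odd_component path_edge {..<n} = odd n"
proof -
  have "\<And>v. v < n \<Longrightarrow> {w \<in> {..<n}. reach path_edge {..<n} v w} = {..<n}"
    using reach_path by auto
  then show ?thesis unfolding has_odd_component_def by (auto intro: odd_pos)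
qed

lemma cc_odd: "odd n \<Longrightarrow> cc n = 0"
  unfolding cc_def using sa_odd odd_path by auto

lemma sum_even: "even n \<Longrightarrow> n > 0 \<Longrightarrow> (\<Sum>U\<in>Pow {..<n}. sa path_edge U) = 0"
  using sa_sum_zero[of "{..<n}" path_edge] odd_path by auto

definition phi :: "nat \<Rightarrow> nat set \<Rightarrow> nat set" where
  "phi j W = {..<j} \<union> (\<lambda>w. w + Suc j) ` W"

lemma path_edge_shift: "path_edge (x + k) (y + k) = path_edge x y"
  unfolding path_edge_def by auto

lemma phi_sa: "finite W \<Longrightarrow> sa path_edge (phi j W) = cc j * sa path_edge W"
proof -
  assume fin: "finite W"
  have "sa path_edge (phi j W) = sa path_edge {..<j} * sa path_edge ((\<lambda>w. w + Suc j) ` W)"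
    unfolding phi_def
    by (rule sa_split) (use fin in \<open>auto simp: path_edge_def\<close>)
  also have "sa path_edge ((\<lambda>w. w + Suc j) ` W) = sa path_edge W"
    by (rule sa_image) (auto simp: inj_on_def path_edge_def)
  finally show ?thesis by (simp add: cc_def)
qed

lemma phi_low: "i \<le> j \<Longrightarrow> (i \<in> phi j W) = (i < j)"
  unfolding phi_def by auto

lemma phi_card:
  assumes "W \<subseteq> {..<m}" "n = m + Suc j"
  shows "phi j W \<subseteq> {..<n}" "card ({..<n} - phi j W) = Suc (card ({..<m} - W))"
proof -
  show sub: "phi j W \<subseteq> {..<n}" using assms unfolding phi_def by auto
  have fW: "finite W" using assms(1) finite_subset by blast
  have c1: "card ((\<lambda>w. w + Suc j) ` W) = card W" by (rule card_image) (simp add: inj_on_def)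
  have disj: "{..<j} \<inter> (\<lambda>w. w + Suc j) ` W = {}" by auto
  have cp: "card (phi j W) = j + card W"
    unfolding phi_def using card_Un_disjoint[of "{..<j}" "(\<lambda>w. w + Suc j) ` W"] disj c1 fW by simp
  have fp: "finite (phi j W)" unfolding phi_def using fW by simp
  have d1: "card ({..<n} - phi j W) = n - card (phi j W)" using card_Diff_subset[OF fp sub] by simp
  have d2: "card ({..<m} - W) = m - card W" using card_Diff_subset[OF fW assms(1)] by simp
  have "card W \<le> m" using assms(1) card_mono[of "{..<m}" W] by simp
  then show "card ({..<n} - phi j W) = Suc (card ({..<m} - W))"
    using d1 d2 cp assms(2) by simp
qed

lemma phi_bij: "bij_betw (\<lambda>(j,W). phi j W) (SIGMA j:{..<n}. Pow {..<n - Suc j}) (Pow {..<n} - {{..<n}})"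
  unfolding bij_betw_def
proof
  show "inj_on (\<lambda>(j, W). phi j W) (SIGMA j:{..<n}. Pow {..<n - Suc j})"
  proof (rule inj_onI, clarify)
    fix j W j' W' assume eq: "phi j W = phi j' W'"
    have jj: "j = j'"
    proof (rule ccontr)
      assume "j \<noteq> j'"
      then have "j < j' \<or> j' < j" by auto
      then show False
      proof
        assume "j < j'"
        then have "j \<in> phi j' W'" using phi_low[of j j' W'] by simp
        moreover have "j \<notin> phi j W" using phi_low[of j j W] by simp
        ultimately show False using eq by simp
      next
        assume "j' < j"
        then have "j' \<in> phi j W" using phi_low[of j' j W] by simp
        moreover have "j' \<notin> phi j' W'" using phi_low[of j' j' W'] by simp
        ultimately show False using eq by simp
      qed
    qed
    have "(\<lambda>w. w + Suc j) ` W = (\<lambda>w. w + Suc j) ` W'"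
    proof -
      have "\<And>X. (\<lambda>w. w + Suc j) ` X = phi j X - {..<j}" unfolding phi_def by auto
      then show ?thesis using eq jj by metis
    qed
    then have "W = W'" by (rule inj_image_eq_iff[THEN iffD1, rotated]) (auto simp: inj_def)
    then show "j = j' \<and> W = W'" using jj by simp
  qed
  show "(\<lambda>(j, W). phi j W) ` (SIGMA j:{..<n}. Pow {..<n - Suc j}) = Pow {..<n} - {{..<n}}"
  proof
    show "(\<lambda>(j, W). phi j W) ` (SIGMA j:{..<n}. Pow {..<n - Suc j}) \<subseteq> Pow {..<n} - {{..<n}}"
    proof clarify
      fix j W assume h: "j < n" "W \<subseteq> {..<n - Suc j}"
      have "n = (n - Suc j) + Suc j" using h by simp
      from phi_card(1)[OF h(2) this] have "phi j W \<subseteq> {..<n}" .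
      moreover have "j \<notin> phi j W" using phi_low[of j j W] by simp
      ultimately show "phi j W \<in> Pow {..<n} - {{..<n}}" using h by auto
    qed
    show "Pow {..<n} - {{..<n}} \<subseteq> (\<lambda>(j, W). phi j W) ` (SIGMA j:{..<n}. Pow {..<n - Suc j})"
    proof
      fix U assume "U \<in> Pow {..<n} - {{..<n}}"
      then have U: "U \<subseteq> {..<n}" "U \<noteq> {..<n}" by auto
      then obtain i where i: "i < n" "i \<notin> U" by auto
      define j where "j = (LEAST i. i \<notin> U)"
      have jU: "j \<notin> U" unfolding j_def using i by (metis LeastI)
      have ji: "j \<le> i" unfolding j_def using i by (simp add: Least_le)
      have low: "\<And>k. k < j \<Longrightarrow> k \<in> U" unfolding j_def using not_less_Least by blast
      define W where "W = (\<lambda>u. u - Suc j) ` {u\<in>U. j < u}"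
      have Wsub: "W \<subseteq> {..<n - Suc j}" unfolding W_def using U by auto
      have "phi j W = U"
      proof -
        have "(\<lambda>w. w + Suc j) ` W = (\<lambda>u. u) ` {u\<in>U. j < u}"
          unfolding W_def image_image by (rule image_cong) auto
        then have im: "(\<lambda>w. w + Suc j) ` W = {u\<in>U. j < u}" by simp
        have "{..<j} \<union> {u\<in>U. j < u} = U"
        proof
          show "{..<j} \<union> {u\<in>U. j < u} \<subseteq> U" using low by auto
          show "U \<subseteq> {..<j} \<union> {u\<in>U. j < u}"
          proof
            fix x assume "x \<in> U"
            then have "x \<noteq> j" using jU by auto
            then have "x < j \<or> j < x" by auto
            then show "x \<in> {..<j} \<union> {u\<in>U. j < u}" using \<open>x \<in> U\<close> by auto
          qed
        qed
        then show ?thesis unfolding phi_def im .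
      qed
      moreover have "j < n" using ji i by simp
      ultimately show "U \<in> (\<lambda>(j, W). phi j W) ` (SIGMA j:{..<n}. Pow {..<n - Suc j})"
        using Wsub by (intro image_eqI[of _ _ "(j, W)"]) auto
    qed
  qed
qed

lemma pCons0_sum: "finite S \<Longrightarrow> pCons 0 (\<Sum>x\<in>S. f x) = (\<Sum>x\<in>S. pCons 0 (f x))"
proof (induction rule: finite_induct)
  case empty then show ?case by simp
next
  case (insert x F)
  have "pCons 0 (f x + sum f F) = pCons 0 (f x) + pCons 0 (sum f F)"
    using add_pCons[of 0 "f x" 0 "sum f F"] by simp
  then show ?case using insert by simp
qed

lemma monom_Suc_mult: "monom (c * s) (Suc k) = [:c:] * pCons 0 (monom s k)"
  by (simp add: monom_Suc smult_monom)

lemma aa_rec: "aa n = [:cc n:] + (\<Sum>j<n. [:cc j:] * pCons 0 (aa (n - Suc j)))"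
proof -
  define F where "F U = monom (sa path_edge U) (card ({..<n} - U))" for U
  have "aa n = (\<Sum>U\<in>Pow {..<n}. F U)" unfolding aa_def sa_poly_def F_def by simp
  also have "Pow {..<n} = insert {..<n} (Pow {..<n} - {{..<n}})" by auto
  also have "(\<Sum>U\<in>insert {..<n} (Pow {..<n} - {{..<n}}). F U) = F {..<n} + (\<Sum>U\<in>Pow {..<n} - {{..<n}}. F U)"
    by (rule sum.insert) auto
  also have "F {..<n} = [:cc n:]" unfolding F_def cc_def by (simp add: monom_0)
  also have "(\<Sum>U\<in>Pow {..<n} - {{..<n}}. F U) = (\<Sum>p\<in>(SIGMA j:{..<n}. Pow {..<n - Suc j}). F ((\<lambda>(j,W). phi j W) p))"
    by (rule sum.reindex_bij_betw[OF phi_bij, symmetric])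
  also have "\<dots> = (\<Sum>p\<in>(SIGMA j:{..<n}. Pow {..<n - Suc j}). (\<lambda>(j,W). [:cc (j::nat):] * pCons 0 (monom (sa path_edge W) (card ({..<n - Suc j} - W)))) p)"
  proof (rule sum.cong[OF refl], clarify)
    fix j W assume h: "j < n" "W \<subseteq> {..<n - Suc j}"
    have nn: "n = (n - Suc j) + Suc j" using h by simp
    have fW: "finite W" using h(2) finite_subset by blast
    show "F (phi j W) = [:cc j:] * pCons 0 (monom (sa path_edge W) (card ({..<n - Suc j} - W)))"
      unfolding F_def phi_card(2)[OF h(2) nn] phi_sa[OF fW] monom_Suc_mult ..
  qed
  also have "\<dots> = (\<Sum>j<n. \<Sum>W\<in>Pow {..<n - Suc j}. [:cc j:] * pCons 0 (monom (sa path_edge W) (card ({..<n - Suc j} - W))))"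
    by (subst sum.Sigma) auto
  also have "\<dots> = (\<Sum>j<n. [:cc j:] * pCons 0 (aa (n - Suc j)))"
  proof (rule sum.cong[OF refl])
    fix j
    show "(\<Sum>W\<in>Pow {..<n - Suc j}. [:cc j:] * pCons 0 (monom (sa path_edge W) (card ({..<n - Suc j} - W)))) = [:cc j:] * pCons 0 (aa (n - Suc j))"
      unfolding aa_def sa_poly_def pCons0_sum[OF finite_Pow_iff[THEN iffD2, OF finite_lessThan]] sum_distrib_left ..
  qed
  finally show ?thesis .
qed

lemma aa0: "aa 0 = 1" unfolding aa_def sa_poly_def by (simp add: sa_empty)
lemma cc0: "cc 0 = 1" unfolding cc_def by (simp add: sa_empty)

lemma poly_aa_sum: "poly (aa n) 1 = (\<Sum>U\<in>Pow {..<n}. sa path_edge U)"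
  unfolding aa_def sa_poly_def by (simp add: poly_sum poly_monom)

lemma bb_even: "even n \<Longrightarrow> n > 0 \<Longrightarrow> poly (aa n) 1 = 0"
  using poly_aa_sum sum_even by simp



instance fract :: ("{idom,ring_char_0}") field_char_0
proof
  show "inj (of_nat :: nat \<Rightarrow> 'a fract)"
    by (rule injI) (simp add: of_nat_fract eq_fract)
qed

type_synonym K = "int poly fract"

lemma emb_add: "Fract (p + q) 1 = Fract p 1 + (Fract q 1 :: 'a::idom fract)" by simp
lemma emb_sum: "finite S \<Longrightarrow> Fract (\<Sum>x\<in>S. f x) 1 = (\<Sum>x\<in>S. Fract (f x) 1 :: 'a::idom fract)"
proof (induction rule: finite_induct)
  case empty then show ?case by (simp add: Zero_fract_def)
next
  case (insert x F)
  then have "Fract (\<Sum>x\<in>insert x F. f x) 1 = Fract (f x) 1 + Fract (\<Sum>x\<in>F. f x) (1::'a)"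
    using add_fract[of 1 1 "f x" "\<Sum>x\<in>F. f x"] by simp
  then show ?case using insert by simp
qed
lemma emb_of_int: "Fract (of_int k) 1 = (of_int k :: 'a::idom fract)"
proof (cases k rule: int_cases)
  case (nonneg n) then show ?thesis using Fract_of_nat_eq[of n] by simp
next
  case (neg n)
  then have e: "of_int k = - (of_nat (Suc n) :: 'a)" by simp
  have h: "Fract (of_int k) 1 = - Fract (of_nat (Suc n)) (1::'a)" unfolding e minus_fract ..
  have a: "Fract (of_int k) 1 = - (of_nat (Suc n) :: 'a fract)" unfolding h Fract_of_nat_eq ..
  have b: "(of_int k :: 'a fract) = - of_nat (Suc n)" using neg by simp
  show ?thesis by (simp only: a b)
qed

definition Cc :: "K fps" where "Cc = Abs_fps (\<lambda>n. of_int (cc n))"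
definition AA :: "K fps" where "AA = Abs_fps (\<lambda>n. Fract (aa n) 1)"
definition BB :: "K fps" where "BB = Abs_fps (\<lambda>n. of_int (poly (aa n) 1))"
definition tt :: K where "tt = Fract [:0, 1:] 1"

lemma aa_rec_emb: "Fract (aa n) 1 = (of_int (cc n) :: K) + (\<Sum>j<n. of_int (cc j) * tt * Fract (aa (n - Suc j)) 1)"
proof -
  have "Fract (aa n) 1 = Fract ([:cc n:] + (\<Sum>j<n. [:cc j:] * pCons 0 (aa (n - Suc j)))) (1 :: int poly)"
    by (subst aa_rec) simp
  also have "\<dots> = Fract [:cc n:] 1 + (\<Sum>j<n. Fract ([:cc j:] * pCons 0 (aa (n - Suc j))) 1)"
    by (simp only: emb_add emb_sum[OF finite_lessThan])
  also have "\<dots> = of_int (cc n) + (\<Sum>j<n. of_int (cc j) * tt * Fract (aa (n - Suc j)) 1)"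
  proof -
    have 1: "\<And>k. Fract [:k:] (1 :: int poly) = of_int k"
      using emb_of_int[where 'a="int poly"] by (simp add: of_int_poly)
    have 3: "Fract ([:c:] * pCons 0 q) (1::int poly) = of_int c * tt * Fract q 1" for c q
    proof -
      have eq: "[:c:] * pCons 0 q = [:c:] * [:0, 1:] * q" by simp
      have "Fract ([:c:] * pCons 0 q) 1 = Fract [:c:] 1 * Fract [:0, 1:] 1 * Fract q (1::int poly)"
        by (subst eq) simp
      then show ?thesis using 1[of c] by (simp add: tt_def)
    qed
    show ?thesis by (simp only: 1 3)
  qed
  finally show ?thesis .
qed

lemma bb_rec: "poly (aa n) 1 = cc n + (\<Sum>j<n. cc j * poly (aa (n - Suc j)) 1)"
  by (subst aa_rec) (simp add: poly_sum)

lemma eqA: "AA = Cc + fps_const tt * (fps_X * (Cc * AA))"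
proof (rule fps_ext)
  fix n show "AA $ n = (Cc + fps_const tt * (fps_X * (Cc * AA))) $ n"
  proof (cases n)
    case 0 then show ?thesis by (simp add: AA_def Cc_def aa0 cc0 One_fract_def)
  next
    case (Suc m)
    have "AA $ n = of_int (cc n) + (\<Sum>j<Suc m. of_int (cc j) * tt * Fract (aa (m - j)) 1)"
      unfolding AA_def using aa_rec_emb[of n] Suc by simp
    also have "(\<Sum>j<Suc m. of_int (cc j) * tt * Fract (aa (m - j)) 1) = tt * (\<Sum>i=0..m. Cc $ i * AA $ (m - i))"
      unfolding sum_distrib_left Cc_def AA_def
      by (simp add: lessThan_Suc_atMost atLeast0AtMost mult_ac)
    finally have "AA $ n = Cc $ n + tt * (Cc * AA) $ m" unfolding fps_mult_nth by (simp add: Cc_def)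
    moreover have "(Cc + fps_const tt * (fps_X * (Cc * AA))) $ n = Cc $ n + tt * (Cc * AA) $ m"
      using Suc by simp
    ultimately show ?thesis using Suc by simp
  qed
qed

lemma eqB: "BB = Cc + fps_X * (Cc * BB)"
proof (rule fps_ext)
  fix n show "BB $ n = (Cc + fps_X * (Cc * BB)) $ n"
  proof (cases n)
    case 0 then show ?thesis by (simp add: BB_def Cc_def aa0 cc0)
  next
    case (Suc m)
    have "BB $ n = of_int (cc n) + (\<Sum>j<Suc m. of_int (cc j) * of_int (poly (aa (m - j)) 1))"
      unfolding BB_def using bb_rec[of n] Suc by simp
    also have "(\<Sum>j<Suc m. of_int (cc j) * of_int (poly (aa (m - j)) 1)) = (\<Sum>i=0..m. Cc $ i * BB $ (m - i))"
      unfolding Cc_def BB_def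
      by (simp add: lessThan_Suc_atMost atLeast0AtMost)
    finally have "BB $ n = Cc $ n + (Cc * BB) $ m" unfolding fps_mult_nth by (simp add: Cc_def)
    moreover have "(Cc + fps_X * (Cc * BB)) $ n = Cc $ n + (Cc * BB) $ m"
      using Suc by simp
    ultimately show ?thesis using Suc by simp
  qed
qed

definition refl :: "'a::comm_ring_1 fps \<Rightarrow> 'a fps" where "refl f = Abs_fps (\<lambda>n. (-1)^n * f$n)"

lemma refl_add: "refl (f + g) = refl f + refl g"
  by (rule fps_ext) (simp add: refl_def algebra_simps)

lemma refl_mult: "refl (f * g) = refl f * refl g"
proof (rule fps_ext)
  fix n
  have "refl (f * g) $ n = (\<Sum>i=0..n. (-1)^n * (f$i * g$(n-i)))"
    by (simp add: refl_def fps_mult_nth sum_distrib_left)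
  also have "\<dots> = (\<Sum>i=0..n. ((-1)^i * f$i) * ((-1)^(n-i) * g$(n-i)))"
  proof (rule sum.cong[OF refl])
    fix i assume "i \<in> {0..n}"
    then have "(-1::'a)^n = (-1)^i * (-1)^(n-i)" by (simp flip: power_add)
    then show "(-1)^n * (f$i * g$(n-i)) = ((-1)^i * f$i) * ((-1)^(n-i) * g$(n-i))"
      by (simp add: mult_ac)
  qed
  also have "\<dots> = (refl f * refl g) $ n" by (simp add: refl_def fps_mult_nth)
  finally show "refl (f * g) $ n = (refl f * refl g) $ n" .
qed

lemma refl_X: "refl fps_X = - fps_X"
  by (rule fps_ext) (simp add: refl_def fps_X_def)

lemma refl_Cc: "refl Cc = Cc"
proof (rule fps_ext)
  fix n show "refl Cc $ n = Cc $ n"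
    by (cases "even n") (auto simp: refl_def Cc_def cc_odd)
qed

lemma refl_BB: "refl BB = 2 - BB"
proof (rule fps_ext)
  fix n show "refl BB $ n = (2 - BB) $ n"
  proof (cases "n = 0")
    case True then show ?thesis by (simp add: refl_def BB_def aa0)
  next
    case False
    then show ?thesis
      by (cases "even n") (auto simp: refl_def BB_def bb_even fps_numeral_nth)
  qed
qed

lemma BB_eq: "BB = 1 + fps_X * Cc"
proof -
  have E1: "BB = Cc + fps_X * (Cc * BB)" by (rule eqB)
  have "refl BB = refl Cc + refl fps_X * (refl Cc * refl BB)"
    by (subst eqB) (simp only: refl_add refl_mult)
  then have E2: "2 - BB = Cc - fps_X * (Cc * (2 - BB))" by (simp add: refl_BB refl_Cc refl_X)
  have "2 * (BB - 1 - fps_X * Cc) = (BB - (Cc + fps_X * (Cc * BB))) - ((2 - BB) - (Cc - fps_X * (Cc * (2 - BB))))"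
    by (simp add: algebra_simps)
  then have "2 * (BB - 1 - fps_X * Cc) = 0" using E1 E2 by simp
  then have "BB - 1 - fps_X * Cc = 0" by (subst (asm) mult_eq_0_iff) simp
  then show ?thesis by (simp add: algebra_simps)
qed

lemma Cc_rel: "Cc + (fps_X * Cc)^2 = 1"
proof -
  have E1: "BB = Cc + fps_X * (Cc * BB)" by (rule eqB)
  have "Cc + (fps_X * Cc)^2 - 1 = - (BB - (Cc + fps_X * (Cc * BB)))"
    unfolding BB_eq by (simp add: algebra_simps power2_eq_square)
  then show ?thesis using E1 by simp
qed

lemma sqrt_eq: "sqrt_1_4x2 = 1 + 2 * fps_X^2 * Cc"
proof -
  let ?S = "1 + 2 * fps_X^2 * Cc"
  have "?S^2 = 1 + 4 * fps_X^2 * (Cc + (fps_X * Cc)^2)"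
    by (simp add: algebra_simps power2_eq_square)
  then have "?S^2 = 1 + 4 * fps_X^2" by (simp only: Cc_rel mult_1_right)
  then have sq: "?S^Suc 1 = 1 + 4 * fps_X^2" by (metis Suc_1)
  have "?S = fps_radical (\<lambda>_ _. 1) (Suc 1) (1 + 4 * fps_X^2)"
    using radical_unique[of "\<lambda>_ _. 1" 1 "1 + 4 * fps_X^2 :: K fps" ?S] sq by simp
  then show ?thesis unfolding sqrt_1_4x2_def by (simp add: numeral_2_eq_2)
qed

lemma tt_nz: "tt \<noteq> 0"
  by (simp add: tt_def eq_fract Zero_fract_def)

theorem mainTheorem1:
  shows "Abs_fps (\<lambda>n. Fract (sa_poly path_edge {..<n}) 1) =
    (-1 + 2 * T * fps_X + sqrt_1_4x2) / (2 * T * fps_X - 2 * (T ^ 2 - 1) * fps_X ^ 2)"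
proof -
  have L: "Abs_fps (\<lambda>n. Fract (sa_poly path_edge {..<n}) 1) = AA" unfolding AA_def aa_def ..
  have Tt: "T = fps_const tt" unfolding T_def tt_def ..
  define W where "W = fps_X * Cc"
  have hA: "AA * (1 - T * W) = Cc"
  proof -
    have "AA * (1 - T * W) - Cc = AA - (Cc + fps_const tt * (fps_X * (Cc * AA)))"
      unfolding W_def Tt by (simp add: algebra_simps)
    then show ?thesis using eqA by simp
  qed
  have rel: "Cc + W^2 = 1" using Cc_rel unfolding W_def .
  have key: "(1 - T * W) * (AA * (T - (T^2 - 1) * fps_X) - (T + W)) =
     T * (Cc + W^2 - 1) + (AA * (1 - T * W) - Cc) * (T - (T^2 - 1) * fps_X)"
    unfolding W_def by (simp add: algebra_simps power2_eq_square)
  have nz: "1 - T * W \<noteq> 0"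
  proof
    assume "1 - T * W = 0"
    then have "(1 - T * W) $ 0 = 0" by simp
    then show False unfolding W_def by simp
  qed
  have "(1 - T * W) * (AA * (T - (T^2 - 1) * fps_X) - (T + W)) = 0"
    unfolding key using hA rel by simp
  then have h2: "AA * (T - (T^2 - 1) * fps_X) = T + W" using nz by simp
  define D where "D = 2 * T * fps_X - 2 * (T ^ 2 - 1) * fps_X ^ 2"
  define N where "N = -1 + 2 * T * fps_X + sqrt_1_4x2"
  have "AA * D - N = 2 * fps_X * (AA * (T - (T^2 - 1) * fps_X) - (T + W))"
    unfolding D_def N_def sqrt_eq W_def by (simp add: algebra_simps power2_eq_square)
  then have AD: "AA * D = N" using h2 by simp
  have Dfac: "D = fps_X * (2 * T - 2 * (T^2 - 1) * fps_X)"
    unfolding D_def by (simp add: algebra_simps power2_eq_square)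
  have c0: "(2 * T - 2 * (T^2 - 1) * fps_X) $ 0 = 2 * tt" unfolding Tt by simp
  have "2 * T - 2 * (T^2 - 1) * fps_X \<noteq> 0"
  proof
    assume "2 * T - 2 * (T^2 - 1) * fps_X = 0"
    then have "2 * tt = 0" using c0 by simp
    then show False using tt_nz by simp
  qed
  then have Dnz: "D \<noteq> 0" unfolding Dfac by simp
  have "N / D = AA" unfolding AD[symmetric] using Dnz by simp
  then show ?thesis unfolding L D_def N_def by simp
qed

end
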